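(* For all integers $m,n\geq 3$, with $T_{m,n}=C_m\Box C_n$, we have $\chi_i(T_{m,n})\geq 5$. Moreover, $\chi_i(T_{m,n})=5$ if and only if $m\equiv 0\pmod 5$ and $n\equiv 0 \pmod 5$.
   Context: For a graph $G$, an incidence is a pair $(v,e)$ with $v\in V(G)$, $e\in E(G)$ and $v$ incident with $e$. Two incidences $(v,e)$ and $(w,f)$ are adjacent if $v=w$, or $e=f$, or the edge $vw$ equals $e$ or $f$. An incidence $k$-coloring of $G$ is a map from the set of incidences of $G$ to a set of $k$ colors such that adjacent incidences receive distinct colors; the incidence chromatic number $\chi_i(G)$ is the least such $k$. $C_n$ denotes the cycle on $n$ vertices and $\Box$ the Cartesian product of graphs: $G\Box H$ has vertex set $V(G)\times V(H)$, with $(u_1,v_1)$ adjacent to $(u_2,v_2)$ iff either $u_1=u_2$ and $v_1v_2\in E(H)$, or $v_1=v_2$ and $u_1u_2\in E(G)$. *)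

theory Defs
  imports Main
begin

text \<open>Simple graphs are represented by their edge set: a set of 2-element vertex sets.\<close>

definition incidences :: "'a set set \<Rightarrow> ('a \<times> 'a set) set" where
  "incidences E = {(v, e). e \<in> E \<and> v \<in> e}"

definition inc_adjacent :: "('a \<times> 'a set) \<Rightarrow> ('a \<times> 'a set) \<Rightarrow> bool" where
  "inc_adjacent I J = (case I of (v, e) \<Rightarrow> case J of (w, f) \<Rightarrow>
      v = w \<or> e = f \<or> {v, w} = e \<or> {v, w} = f)"

definition incidence_colouring :: "'a set set \<Rightarrow> nat \<Rightarrow> (('a \<times> 'a set) \<Rightarrow> nat) \<Rightarrow> bool" where
  "incidence_colouring E k c \<longleftrightarrow>
     (\<forall>I\<in>incidences E. c I < k) \<and>
     (\<forall>I\<in>incidences E. \<forall>J\<in>incidences E. I \<noteq> J \<and> inc_adjacent I J \<longrightarrow> c I \<noteq> c J)"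

definition incidence_chromatic_number :: "'a set set \<Rightarrow> nat" where
  "incidence_chromatic_number E = (LEAST k. \<exists>c. incidence_colouring E k c)"

definition cycle_edges :: "nat \<Rightarrow> nat set set" where
  "cycle_edges m = {{i, (i + 1) mod m} | i. i < m}"

definition cart_prod_edges ::
  "'a set \<Rightarrow> 'a set set \<Rightarrow> 'b set \<Rightarrow> 'b set set \<Rightarrow> ('a \<times> 'b) set set" where
  "cart_prod_edges VG EG VH EH =
     {{(u, v1), (u, v2)} | u v1 v2. u \<in> VG \<and> {v1, v2} \<in> EH} \<union>
     {{(u1, v), (u2, v)} | u1 u2 v. v \<in> VH \<and> {u1, u2} \<in> EG}"

text \<open>The torus T_{m,n} = C_m \<box> C_n (edge set; all vertices have positive degree).\<close>
definition torus_edges :: "nat \<Rightarrow> nat \<Rightarrow> (nat \<times> nat) set set" where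
  "torus_edges m n = cart_prod_edges {0..<m} (cycle_edges m) {0..<n} (cycle_edges n)"

end

theory Submission
  imports Defs "HOL-Number_Theory.Cong"
begin


definition Vs :: "nat \<Rightarrow> nat \<Rightarrow> (nat\<times>nat) set" where "Vs m n = {0..<m} \<times> {0..<n}"
definition Rt :: "nat \<Rightarrow> nat\<times>nat \<Rightarrow> nat\<times>nat" where "Rt m p = ((fst p + 1) mod m, snd p)"
definition Lt :: "nat \<Rightarrow> nat\<times>nat \<Rightarrow> nat\<times>nat" where "Lt m p = ((fst p + m - 1) mod m, snd p)"
definition Ut :: "nat \<Rightarrow> nat\<times>nat \<Rightarrow> nat\<times>nat" where "Ut n p = (fst p, (snd p + 1) mod n)"
definition Dt :: "nat \<Rightarrow> nat\<times>nat \<Rightarrow> nat\<times>nat" where "Dt n p = (fst p, (snd p + n - 1) mod n)"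

lemma doubleton_pair1: "{v1,v2} = {a,b} \<Longrightarrow> {(u::'a,v1),(u,v2)} = {(u,a),(u,b)}"
  by (auto simp: doubleton_eq_iff)
lemma doubleton_pair2: "{v1,v2} = {a,b} \<Longrightarrow> {(v1,u::'a),(v2,u)} = {(a,u),(b,u)}"
  by (auto simp: doubleton_eq_iff)

lemma edges_char:
  assumes "m > 0" "n > 0"
  shows "e \<in> torus_edges m n \<longleftrightarrow> (\<exists>p\<in>Vs m n. e = {p, Rt m p} \<or> e = {p, Ut n p})"
proof
  assume "e \<in> torus_edges m n"
  then show "\<exists>p\<in>Vs m n. e = {p, Rt m p} \<or> e = {p, Ut n p}"
    unfolding torus_edges_def cart_prod_edges_def cycle_edges_def
  proof (elim UnE CollectE exE conjE)
    fix u v1 v2 i assume *: "e = {(u, v1), (u, v2)}" "u \<in> {0..<m}" "{v1, v2} = {i, (i + 1) mod n}" "i < n"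
    then have "e = {(u,i),(u,(i+1) mod n)}" using doubleton_pair1 by metis
    then show ?thesis using * by (intro bexI[of _ "(u,i)"]) (auto simp: Ut_def Vs_def)
  next
    fix u1 u2 v i assume *: "e = {(u1, v), (u2, v)}" "v \<in> {0..<n}" "{u1, u2} = {i, (i + 1) mod m}" "i < m"
    then have "e = {(i,v),((i+1) mod m,v)}" using doubleton_pair2 by metis
    then show ?thesis using * by (intro bexI[of _ "(i,v)"]) (auto simp: Rt_def Vs_def)
  qed
next
  assume "\<exists>p\<in>Vs m n. e = {p, Rt m p} \<or> e = {p, Ut n p}"
  then obtain i j where ij: "i < m" "j < n" "e = {(i,j), Rt m (i,j)} \<or> e = {(i,j), Ut n (i,j)}"
    by (auto simp: Vs_def)
  have c1: "{i, (i+1) mod m} \<in> cycle_edges m" "{j, (j+1) mod n} \<in> cycle_edges n"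
    using ij unfolding cycle_edges_def by blast+
  show "e \<in> torus_edges m n"
  proof (cases "e = {(i,j), Rt m (i,j)}")
    case True
    then show ?thesis unfolding torus_edges_def cart_prod_edges_def using c1 ij
      by (intro UnI2 CollectI exI[of _ i] exI[of _ "(i+1) mod m"] exI[of _ j]) (simp add: Rt_def)
  next
    case False
    then have "e = {(i,j), Ut n (i,j)}" using ij by blast
    then show ?thesis unfolding torus_edges_def cart_prod_edges_def using c1 ij
      by (intro UnI1 CollectI exI[of _ i] exI[of _ j] exI[of _ "(j+1) mod n"]) (simp add: Ut_def)
  qed
qed


lemma mod_lemmas:
  fixes i m :: nat
  assumes "i < m"
  shows "((i + 1) mod m + m - 1) mod m = i" "((i + m - 1) mod m + 1) mod m = i"
    "m \<ge> 2 \<Longrightarrow> (i+1) mod m \<noteq> i" "m \<ge> 2 \<Longrightarrow> (i+m-1) mod m \<noteq> i"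
    "m \<ge> 3 \<Longrightarrow> (i+1) mod m \<noteq> (i+m-1) mod m"
proof -
  show "((i + 1) mod m + m - 1) mod m = i"
    using assms by (cases "i + 1 = m") auto
  show "((i + m - 1) mod m + 1) mod m = i"
  proof (cases "i = 0")
    case True then show ?thesis using assms by (simp add: mod_Suc)
  next
    case False
    then have "(i + m - 1) mod m = i - 1" using assms
      by (metis Nat.add_diff_assoc2 One_nat_def Suc_leI add.commute less_imp_diff_less mod_add_self2 mod_less neq0_conv)
    then show ?thesis using False assms by simp
  qed
  show "m \<ge> 2 \<Longrightarrow> (i+1) mod m \<noteq> i"
    using assms by (cases "i + 1 = m") auto
  show "m \<ge> 2 \<Longrightarrow> (i+m-1) mod m \<noteq> i"
    using assms by (cases "i = 0") (auto simp: mod_if)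
  show "m \<ge> 3 \<Longrightarrow> (i+1) mod m \<noteq> (i+m-1) mod m"
    using assms by (cases "i = 0"; cases "i + 1 = m") (auto simp: mod_if)
qed


context
  fixes m n :: nat
  assumes mn: "m \<ge> 3" "n \<ge> 3"
begin

lemma nb_in: "p \<in> Vs m n \<Longrightarrow> Rt m p \<in> Vs m n \<and> Lt m p \<in> Vs m n \<and> Ut n p \<in> Vs m n \<and> Dt n p \<in> Vs m n"
  using mn by (auto simp: Vs_def Rt_def Lt_def Ut_def Dt_def)

lemma nb_inv: "p \<in> Vs m n \<Longrightarrow> Lt m (Rt m p) = p \<and> Rt m (Lt m p) = p \<and> Dt n (Ut n p) = p \<and> Ut n (Dt n p) = p"
  using mod_lemmas(1,2) by (cases p) (auto simp: Vs_def Rt_def Lt_def Ut_def Dt_def)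

lemma nb_dist: "p \<in> Vs m n \<Longrightarrow> distinct [Rt m p, Lt m p, Ut n p, Dt n p, p]"
  using mod_lemmas(3,4,5) mn by (cases p) (auto simp: Vs_def Rt_def Lt_def Ut_def Dt_def)

lemma nb_edges: "p \<in> Vs m n \<Longrightarrow> {p, Rt m p} \<in> torus_edges m n \<and> {p, Lt m p} \<in> torus_edges m n
   \<and> {p, Ut n p} \<in> torus_edges m n \<and> {p, Dt n p} \<in> torus_edges m n"
proof -
  assume p: "p \<in> Vs m n"
  have 0: "m > 0" "n > 0" using mn by auto
  have "{p, Lt m p} = {Lt m p, Rt m (Lt m p)}" "{p, Dt n p} = {Dt n p, Ut n (Dt n p)}"
    using nb_inv[OF p] by auto
  then show ?thesis using edges_char[OF 0] p nb_in[OF p] by metis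
qed

lemma N4: "e \<in> torus_edges m n \<Longrightarrow> v \<in> e \<Longrightarrow> v \<in> Vs m n \<and> (\<exists>a\<in>{Rt m v, Lt m v, Ut n v, Dt n v}. e = {v, a})"
proof -
  assume e: "e \<in> torus_edges m n" and v: "v \<in> e"
  have 0: "m > 0" "n > 0" using mn by auto
  from e obtain p where p: "p \<in> Vs m n" "e = {p, Rt m p} \<or> e = {p, Ut n p}"
    using edges_char[OF 0] by blast
  show ?thesis
    using p v nb_in[OF p(1)] nb_inv[OF p(1)] by (auto simp: insert_commute)
qed

end


lemma col_neq: "incidence_colouring E k c \<Longrightarrow> I \<in> incidences E \<Longrightarrow> J \<in> incidences E \<Longrightarrow> I \<noteq> J
   \<Longrightarrow> inc_adjacent I J \<Longrightarrow> c I \<noteq> c J"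
  unfolding incidence_colouring_def by blast

lemma col_lt: "incidence_colouring E k c \<Longrightarrow> I \<in> incidences E \<Longrightarrow> c I < k"
  unfolding incidence_colouring_def by blast

lemma star:
  assumes col: "incidence_colouring E k c"
    and e: "{v,w1} \<in> E" "{v,w2} \<in> E" "{v,w3} \<in> E" "{v,w4} \<in> E"
    and d: "distinct [w1,w2,w3,w4,v]"
  shows "distinct [c(v,{v,w1}), c(v,{v,w2}), c(v,{v,w3}), c(v,{v,w4})]"
    "w \<in> {w1,w2,w3,w4} \<Longrightarrow> c(w,{v,w}) \<notin> {c(v,{v,w1}), c(v,{v,w2}), c(v,{v,w3}), c(v,{v,w4})}"
proof -
  have inc: "(v,{v,w}) \<in> incidences E" "(w,{v,w}) \<in> incidences E" if "w \<in> {w1,w2,w3,w4}" for w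
    using that e unfolding incidences_def by auto
  have o: "c(v,{v,w}) \<noteq> c(v,{v,w'})" if "w \<in> {w1,w2,w3,w4}" "w' \<in> {w1,w2,w3,w4}" "w \<noteq> w'" for w w'
  proof (rule col_neq[OF col inc(1)[OF that(1)] inc(1)[OF that(2)]])
    show "(v, {v, w}) \<noteq> (v, {v, w'})" using that d by (auto simp: doubleton_eq_iff)
    show "inc_adjacent (v, {v, w}) (v, {v, w'})" unfolding inc_adjacent_def by simp
  qed
  then show "distinct [c(v,{v,w1}), c(v,{v,w2}), c(v,{v,w3}), c(v,{v,w4})]"
    using d by auto
  have i: "c(w,{v,w}) \<noteq> c(v,{v,w'})" if "w \<in> {w1,w2,w3,w4}" "w' \<in> {w1,w2,w3,w4}" for w w'
  proof (rule col_neq[OF col inc(2)[OF that(1)] inc(1)[OF that(2)]])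
    show "(w, {v, w}) \<noteq> (v, {v, w'})" using that d by auto
    show "inc_adjacent (w, {v, w}) (v, {v, w'})" unfolding inc_adjacent_def by (simp add: insert_commute)
  qed
  show "w \<in> {w1,w2,w3,w4} \<Longrightarrow> c(w,{v,w}) \<notin> {c(v,{v,w1}), c(v,{v,w2}), c(v,{v,w3}), c(v,{v,w4})}"
    using i by blast
qed

lemma pig5:
  fixes a1 a2 a3 a4 x y :: nat
  assumes "distinct [a1,a2,a3,a4,x]" "a1 < 5" "a2 < 5" "a3 < 5" "a4 < 5" "x < 5" "y < 5"
  shows "y \<in> {a1,a2,a3,a4,x}"
proof -
  have "card (set [a1,a2,a3,a4,x]) = 5" using assms(1) distinct_card by fastforce
  moreover have "set [a1,a2,a3,a4,x] \<subseteq> {0..<5}" using assms by auto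
  ultimately have "set [a1,a2,a3,a4,x] = {0..<5}" by (simp add: card_subset_eq)
  then show ?thesis using assms by auto
qed

lemma ge5:
  fixes a1 a2 a3 a4 x :: nat
  assumes "distinct [a1,a2,a3,a4,x]" "a1 < k" "a2 < k" "a3 < k" "a4 < k" "x < k"
  shows "5 \<le> k"
proof -
  have "card (set [a1,a2,a3,a4,x]) = 5" using assms(1) distinct_card by fastforce
  moreover have "set [a1,a2,a3,a4,x] \<subseteq> {0..<k}" using assms by auto
  ultimately show ?thesis by (metis card_atLeastLessThan card_mono finite_atLeastLessThan minus_nat.diff_0)
qed


context
  fixes m n :: nat
  assumes mn: "m \<ge> 3" "n \<ge> 3"
begin

lemma star_at:
  assumes col: "incidence_colouring (torus_edges m n) k c" and p: "p \<in> Vs m n"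
  shows "distinct [c(p,{p,Rt m p}), c(p,{p,Lt m p}), c(p,{p,Ut n p}), c(p,{p,Dt n p})]"
    "w \<in> {Rt m p, Lt m p, Ut n p, Dt n p} \<Longrightarrow> c(w,{p,w}) \<notin> {c(p,{p,Rt m p}), c(p,{p,Lt m p}), c(p,{p,Ut n p}), c(p,{p,Dt n p})}"
    "w \<in> {Rt m p, Lt m p, Ut n p, Dt n p} \<Longrightarrow> c(w,{p,w}) < k \<and> c(p,{p,w}) < k"
proof -
  note e = nb_edges[OF mn p]
  show "distinct [c(p,{p,Rt m p}), c(p,{p,Lt m p}), c(p,{p,Ut n p}), c(p,{p,Dt n p})]"
    using star(1)[OF col _ _ _ _ nb_dist[OF mn p]] e by blast
  show "w \<in> {Rt m p, Lt m p, Ut n p, Dt n p} \<Longrightarrow> c(w,{p,w}) \<notin> {c(p,{p,Rt m p}), c(p,{p,Lt m p}), c(p,{p,Ut n p}), c(p,{p,Dt n p})}"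
    using star(2)[OF col _ _ _ _ nb_dist[OF mn p]] e by blast
  assume w: "w \<in> {Rt m p, Lt m p, Ut n p, Dt n p}"
  then have "{p,w} \<in> torus_edges m n" using e by blast
  then have "(w,{p,w}) \<in> incidences (torus_edges m n)" "(p,{p,w}) \<in> incidences (torus_edges m n)"
    unfolding incidences_def by auto
  then show "c(w,{p,w}) < k \<and> c(p,{p,w}) < k" using col_lt[OF col] by blast
qed

lemma lower: "incidence_colouring (torus_edges m n) k c \<Longrightarrow> 5 \<le> k"
proof -
  assume col: "incidence_colouring (torus_edges m n) k c"
  define p where "p = (0::nat,0::nat)"
  have p: "p \<in> Vs m n" using mn by (auto simp: p_def Vs_def)
  note s = star_at[OF col p]
  have "distinct [c(p,{p,Rt m p}), c(p,{p,Lt m p}), c(p,{p,Ut n p}), c(p,{p,Dt n p}), c(Rt m p, {p, Rt m p})]"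
    using s(1) s(2)[of "Rt m p"] by auto
  then show ?thesis by (rule ge5) (use s(3) in auto)
qed

definition gcol :: "((nat\<times>nat) \<times> (nat\<times>nat) set \<Rightarrow> nat) \<Rightarrow> nat\<times>nat \<Rightarrow> nat" where
  "gcol c p = c(Rt m p, {p, Rt m p})"

lemma in_eq:
  assumes col: "incidence_colouring (torus_edges m n) 5 c" and p: "p \<in> Vs m n"
    and w: "w \<in> {Rt m p, Lt m p, Ut n p, Dt n p}"
  shows "c(w,{p,w}) = gcol c p"
proof -
  note s = star_at[OF col p]
  have "c(w,{p,w}) \<in> {c(p,{p,Rt m p}), c(p,{p,Lt m p}), c(p,{p,Ut n p}), c(p,{p,Dt n p}), c(Rt m p, {p, Rt m p})}"
    apply (rule pig5)
    using s(1) s(2)[of "Rt m p"] s(3)[of "Rt m p"] s(3)[of "Lt m p"] s(3)[of "Ut n p"] s(3)[of "Dt n p"] s(3)[OF w]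
    by auto
  then show ?thesis using s(2)[OF w] unfolding gcol_def by blast
qed

lemma rainbow:
  assumes col: "incidence_colouring (torus_edges m n) 5 c" and p: "p \<in> Vs m n"
  shows "distinct [gcol c (Rt m p), gcol c (Lt m p), gcol c (Ut n p), gcol c (Dt n p), gcol c p]"
    "gcol c p < 5"
proof -
  note s = star_at[OF col p]
  note ni = nb_in[OF mn p] and nv = nb_inv[OF mn p]
  have "gcol c (Rt m p) = c(p,{p,Rt m p})"
    using in_eq[OF col conjunct1[OF ni], of p] nv by (simp add: insert_commute)
  moreover have "gcol c (Lt m p) = c(p,{p,Lt m p})"
    using in_eq[OF col conjunct1[OF conjunct2[OF ni]], of p] nv by (simp add: insert_commute)
  moreover have "gcol c (Ut n p) = c(p,{p,Ut n p})"
    using in_eq[OF col conjunct1[OF conjunct2[OF conjunct2[OF ni]]], of p] nv by (simp add: insert_commute)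
  moreover have "gcol c (Dt n p) = c(p,{p,Dt n p})"
    using in_eq[OF col conjunct2[OF conjunct2[OF conjunct2[OF ni]]], of p] nv by (simp add: insert_commute)
  ultimately show "distinct [gcol c (Rt m p), gcol c (Lt m p), gcol c (Ut n p), gcol c (Dt n p), gcol c p]"
    using s(1) s(2)[of "Rt m p"] unfolding gcol_def by auto
  show "gcol c p < 5" using s(3)[of "Rt m p"] unfolding gcol_def by auto
qed

end



definition Vt :: "nat \<Rightarrow> nat \<Rightarrow> int \<Rightarrow> int \<Rightarrow> nat \<times> nat" where
  "Vt m n x y = (nat (x mod int m), nat (y mod int n))"

lemma nat_mod_succ: "m > 0 \<Longrightarrow> nat ((x + 1) mod int m) = (nat (x mod int m) + 1) mod m"
proof -
  assume m: "m > 0"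
  have "int ((nat (x mod int m) + 1) mod m) = (x mod int m + 1) mod int m"
    using m by (simp add: zmod_int add.commute)
  also have "\<dots> = (x + 1) mod int m" by (simp add: mod_add_left_eq)
  finally show ?thesis by (metis nat_int)
qed

lemma nat_mod_pred: "m > 0 \<Longrightarrow> nat ((x - 1) mod int m) = (nat (x mod int m) + m - 1) mod m"
proof -
  assume m: "m > 0"
  have "int ((nat (x mod int m) + m - 1) mod m) = (x mod int m + int m - 1) mod int m"
    using m by (simp add: zmod_int of_nat_diff)
  also have "\<dots> = (x - 1) mod int m"
    by (metis (no_types, opaque_lifting) add.commute add_diff_eq mod_add_left_eq mod_add_self1)
  finally show ?thesis by (metis nat_int)
qed


lemma pig5b:
  fixes a1 a2 a3 a4 x y :: nat
  assumes "distinct [a1,a2,a3,a4,x]" "a1 < 5" "a2 < 5" "a3 < 5" "a4 < 5" "x < 5" "y < 5"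
  shows "y \<in> {a1,a2,a3,a4,x}"
proof -
  have "card (set [a1,a2,a3,a4,x]) = 5" using assms(1) distinct_card by fastforce
  moreover have "set [a1,a2,a3,a4,x] \<subseteq> {0..<5}" using assms by auto
  ultimately have "set [a1,a2,a3,a4,x] = {0..<5}" by (simp add: card_subset_eq)
  then show ?thesis using assms by auto
qed

definition PP :: "(int \<Rightarrow> int \<Rightarrow> nat) \<Rightarrow> int \<Rightarrow> int \<Rightarrow> bool" where
  "PP G x y \<longleftrightarrow> G (x+2) (y+1) = G x y \<and> G (x+1) (y-2) = G x y \<and> G (x-2) (y-1) = G x y \<and> G (x-1) (y+2) = G x y"

context
  fixes G :: "int \<Rightarrow> int \<Rightarrow> nat"
  assumes D: "\<And>x y. distinct [G (x+1) y, G (x-1) y, G x (y+1), G x (y-1), G x y]"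
    and Bd: "\<And>x y. G x y < 5"
begin

lemma cover: "G u v \<in> {G (x+1) y, G (x-1) y, G x (y+1), G x (y-1), G x y}"
  by (rule pig5b[OF D Bd Bd Bd Bd Bd Bd])

lemma Dx: "a = x+1 \<Longrightarrow> b = x - 1 \<Longrightarrow> c = y+1 \<Longrightarrow> d = y-1 \<Longrightarrow> distinct [G a y, G b y, G x c, G x d, G x y]"
  using D by simp

lemma Cx: "a = x+1 \<Longrightarrow> b = x - 1 \<Longrightarrow> c = y+1 \<Longrightarrow> d = y-1 \<Longrightarrow> G u v \<in> {G a y, G b y, G x c, G x d, G x y}"
  using cover by simp

lemma A0: "G (x+2) (y+1) = G x y \<or> G (x+1) (y+2) = G x y"
proof -
  have "G x y \<in> {G (x+2) (y+1), G x (y+1), G (x+1) (y+2), G (x+1) y, G (x+1) (y+1)}"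
    by (rule Cx) simp_all
  moreover have "distinct [G (x+1) y, G (x-1) y, G x (y+1), G x (y-1), G x y]" by (rule Dx) simp_all
  moreover have "distinct [G (x+2) y, G x y, G (x+1) (y+1), G (x+1) (y-1), G (x+1) y]" by (rule Dx) simp_all
  ultimately show ?thesis by auto
qed

lemma A1: assumes h: "G (x+2) (y+1) = G x y" shows "PP G x y"
proof -
  have d0: "distinct [G (x+1) y, G (x-1) y, G x (y+1), G x (y-1), G x y]" by (rule Dx) simp_all
  have d1: "distinct [G (x+2) y, G x y, G (x+1) (y+1), G (x+1) (y-1), G (x+1) y]" by (rule Dx) simp_all
  have d2: "distinct [G (x+3) y, G (x+1) y, G (x+2) (y+1), G (x+2) (y-1), G (x+2) y]" by (rule Dx) simp_all
  have "G x y \<in> {G (x+2) (y-1), G x (y-1), G (x+1) y, G (x+1) (y-2), G (x+1) (y-1)}"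
    by (rule Cx) simp_all
  then have h2: "G (x+1) (y-2) = G x y" using d0 d1 d2 h by auto
  have d3: "distinct [G x y, G (x-2) y, G (x-1) (y+1), G (x-1) (y-1), G (x-1) y]" by (rule Dx) simp_all
  have d4: "distinct [G (x+1) (y-2), G (x-1) (y-2), G x (y-1), G x (y-3), G x (y-2)]" by (rule Dx) simp_all
  have "G x y \<in> {G x (y-1), G (x-2) (y-1), G (x-1) y, G (x-1) (y-2), G (x-1) (y-1)}"
    by (rule Cx) simp_all
  then have h3: "G (x-2) (y-1) = G x y" using d0 d3 d4 h2 by auto
  have d5: "distinct [G (x-1) y, G (x-3) y, G (x-2) (y+1), G (x-2) (y-1), G (x-2) y]" by (rule Dx) simp_all
  have "G x y \<in> {G x (y+1), G (x-2) (y+1), G (x-1) (y+2), G (x-1) y, G (x-1) (y+1)}"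
    by (rule Cx) simp_all
  then have h4: "G (x-1) (y+2) = G x y" using d0 d3 d5 h3 by auto
  show ?thesis unfolding PP_def using h h2 h3 h4 by auto
qed

end


lemma D_transp:
  assumes D: "\<And>x y. distinct [G (x+1) y, G (x-1) y, G x (y+1), G x (y-1), G x y]"
  shows "distinct [(\<lambda>a b. G b a) (x+1) y, (\<lambda>a b. G b a) (x-1) y, (\<lambda>a b. G b a) x (y+1), (\<lambda>a b. G b a) x (y-1), (\<lambda>a b. G b a) x y]"
  using D[of y x] by auto

context
  fixes G :: "int \<Rightarrow> int \<Rightarrow> nat"
  assumes D: "\<And>x y. distinct [G (x+1) y, G (x-1) y, G x (y+1), G x (y-1), G x y]"
    and Bd: "\<And>x y. G x y < 5"
begin

lemma Q1: assumes h: "G (x+1) (y+2) = G x y"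
  shows "G (x+1) (y+2) = G x y \<and> G (x+2) (y-1) = G x y \<and> G (x-1) (y-2) = G x y \<and> G (x-2) (y+1) = G x y"
proof -
  have "PP (\<lambda>a b. G b a) y x"
    by (rule A1[of "\<lambda>a b. G b a"]) (use D_transp[OF D] Bd h in auto)
  then show ?thesis unfolding PP_def by auto
qed

lemma prop1: assumes "PP G x y" "x' = x+2" "y' = y+1" shows "PP G x' y'"
proof -
  have "G (x'+2) (y'+1) = G x' y' \<or> G (x'+1) (y'+2) = G x' y'" by (rule A0[OF D Bd])
  moreover have "G (x'+1) (y'+2) \<noteq> G x' y'"
  proof
    assume "G (x'+1) (y'+2) = G x' y'"
    then have q: "G (x'-1) (y'-2) = G x' y'" using Q1 by blast
    have e: "x+2-1 = x+(1::int)" "y+1-2 = y-(1::int)" by simp_all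
    have "G (x+1) (y-1) = G x y" using q assms(1) unfolding assms(2,3) PP_def by (simp only: e)
    moreover have "distinct [G (x+2) y, G x y, G (x+1) (y+1), G (x+1) (y-1), G (x+1) y]" by (rule Dx[OF D Bd]) simp_all
    ultimately show False using assms unfolding PP_def by auto
  qed
  ultimately show ?thesis using A1[OF D Bd] by blast
qed

lemma prop2: assumes "PP G x y" "x' = x+1" "y' = y-2" shows "PP G x' y'"
proof -
  have "G (x'+2) (y'+1) = G x' y' \<or> G (x'+1) (y'+2) = G x' y'" by (rule A0[OF D Bd])
  moreover have "G (x'+1) (y'+2) \<noteq> G x' y'"
  proof
    assume "G (x'+1) (y'+2) = G x' y'"
    then have q: "G (x'-2) (y'+1) = G x' y'" using Q1 by blast
    have e: "x+1-2 = x-(1::int)" "y-2+1 = y-(1::int)" by simp_all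
    have "G (x-1) (y-1) = G x y" using q assms(1) unfolding assms(2,3) PP_def by (simp only: e)
    moreover have "distinct [G x y, G (x-2) y, G (x-1) (y+1), G (x-1) (y-1), G (x-1) y]" by (rule Dx[OF D Bd]) simp_all
    ultimately show False using assms unfolding PP_def by auto
  qed
  ultimately show ?thesis using A1[OF D Bd] by blast
qed

lemma prop3: assumes "PP G x y" "x' = x-1" "y' = y+2" shows "PP G x' y'"
proof -
  have "G (x'+2) (y'+1) = G x' y' \<or> G (x'+1) (y'+2) = G x' y'" by (rule A0[OF D Bd])
  moreover have "G (x'+1) (y'+2) \<noteq> G x' y'"
  proof
    assume "G (x'+1) (y'+2) = G x' y'"
    then have q: "G (x'+2) (y'-1) = G x' y'" using Q1 by blast
    have e: "x-1+2 = x+(1::int)" "y+2-1 = y+(1::int)" by simp_all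
    have "G (x+1) (y+1) = G x y" using q assms(1) unfolding assms(2,3) PP_def by (simp only: e)
    moreover have "distinct [G (x+1) (y+1), G (x-1) (y+1), G x (y+2), G x y, G x (y+1)]" by (rule Dx[OF D Bd]) simp_all
    ultimately show False using assms unfolding PP_def by auto
  qed
  ultimately show ?thesis using A1[OF D Bd] by blast
qed

lemma step5: assumes "PP G x y" shows "PP G (x+5) y \<and> G (x+5) y = G x y" "PP G x (y+5) \<and> G x (y+5) = G x y"
proof -
  have a: "PP G (x+2) (y+1)" by (rule prop1[OF assms]) simp_all
  have b: "PP G (x+4) (y+2)" by (rule prop1[OF a]) simp_all
  have c: "PP G (x+5) y" by (rule prop2[OF b]) simp_all
  show "PP G (x+5) y \<and> G (x+5) y = G x y" using assms a b c unfolding PP_def by (simp add: ac_simps)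
  have d: "PP G (x+1) (y+3)" by (rule prop3[OF a]) simp_all
  have e: "PP G x (y+5)" by (rule prop3[OF d]) simp_all
  show "PP G x (y+5) \<and> G x (y+5) = G x y" using assms a d e unfolding PP_def by (simp add: ac_simps)
qed

lemma iter5a: assumes "PP G x y" shows "G (x + 5 * int k) y = G x y \<and> PP G (x + 5 * int k) y"
proof (induction k)
  case 0 show ?case using assms by simp
next
  case (Suc k) then show ?case using step5(1)[of "x + 5 * int k" y] by (simp add: algebra_simps)
qed

lemma iter5b: assumes "PP G x y" shows "G x (y + 5 * int k) = G x y \<and> PP G x (y + 5 * int k)"
proof (induction k)
  case 0 show ?case using assms by simp
next
  case (Suc k) then show ?case using step5(2)[of x "y + 5 * int k"] by (simp add: algebra_simps)
qed

end

lemma period5: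
  fixes G :: "int \<Rightarrow> int \<Rightarrow> nat"
  assumes D: "\<And>x y. distinct [G (x+1) y, G (x-1) y, G x (y+1), G x (y-1), G x y]"
    and Bd: "\<And>x y. G x y < 5"
  shows "G (5 * int k) 0 = G 0 0 \<and> G 0 (5 * int k) = G 0 0"
proof -
  have "G (0+2) (0+1) = G 0 0 \<or> G (0+1) (0+2) = G 0 0" by (rule A0[OF D Bd])
  then show ?thesis
  proof
    assume "G (0+2) (0+1) = G 0 0"
    then have "PP G 0 0" by (rule A1[OF D Bd])
    then show ?thesis using iter5a[OF D Bd, of 0 0 k] iter5b[OF D Bd, of 0 0 k] by simp
  next
    have D': "\<And>x y. distinct [(\<lambda>a b. G b a) (x+1) y, (\<lambda>a b. G b a) (x-1) y, (\<lambda>a b. G b a) x (y+1), (\<lambda>a b. G b a) x (y-1), (\<lambda>a b. G b a) x y]"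
      by (rule D_transp[OF D])
    have B': "\<And>x y. (\<lambda>a b. G b a) x y < 5" using Bd by simp
    assume "G (0+1) (0+2) = G 0 0"
    then have "PP (\<lambda>a b. G b a) 0 0"
      by (intro A1[OF D' B']) simp
    then show ?thesis using iter5a[OF D' B', of 0 0 k] iter5b[OF D' B', of 0 0 k] by simp
  qed
qed



lemma d5: "(d::nat) dvd 5 \<Longrightarrow> d = 1 \<or> d = 5"
proof -
  assume h: "d dvd 5"
  then have "d \<le> 5" by (simp add: dvd_imp_le)
  then have "d = 0 \<or> d = 1 \<or> d = 2 \<or> d = 3 \<or> d = 4 \<or> d = 5" by arith
  then show ?thesis using h by auto
qed
lemma prime5: "prime (5::nat)" using d5 by (auto simp: prime_nat_iff)

lemma wrap:
  fixes G :: "int \<Rightarrow> nat"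
  assumes m: "m \<ge> 3" and per: "\<And>x t. G (x + int m * t) = G x"
    and p5: "\<And>k. G (5 * int k) = G 0" and nd: "\<not> 5 dvd m"
  shows "G 1 = G 0"
proof -
  have "coprime 5 m" using prime_imp_coprime[OF prime5 nd] .
  then obtain k where k: "[5 * k = Suc 0] (mod m)" using cong_solve_coprime_nat by blast
  then have "(5 * k) mod m = 1" using m by (simp add: cong_def)
  then have "5 * k = 5 * k div m * m + 1" using div_mult_mod_eq[of "5*k" m] by simp
  then have "int (5 * k) = 1 + int m * int (5 * k div m)"
    by (metis add.commute mult.commute of_nat_1 of_nat_add of_nat_mult)
  then have "5 * int k = 1 + int m * int (5 * k div m)" by simp
  then have "G 0 = G (1 + int m * int (5 * k div m))" using p5[of k] by simp
  then show ?thesis using per[of 1 "int (5 * k div m)"] by simp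
qed

lemma Vt_props:
  assumes "m > 0" "n > 0"
  shows "Vt m n (x+1) y = Rt m (Vt m n x y)" "Vt m n (x-1) y = Lt m (Vt m n x y)"
    "Vt m n x (y+1) = Ut n (Vt m n x y)" "Vt m n x (y-1) = Dt n (Vt m n x y)"
    "Vt m n x y \<in> Vs m n"
    "Vt m n (x + int m * t) y = Vt m n x y" "Vt m n x (y + int n * t) = Vt m n x y"
  using assms nat_mod_succ[of m x] nat_mod_pred[of m x] nat_mod_succ[of n y] nat_mod_pred[of n y]
  by (auto simp: Vt_def Rt_def Lt_def Ut_def Dt_def Vs_def nat_less_iff)

lemma forward:
  assumes mn: "m \<ge> 3" "n \<ge> 3" and col: "incidence_colouring (torus_edges m n) 5 c"
  shows "5 dvd m \<and> 5 dvd n"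
proof -
  define Gf where "Gf x y = gcol m c (Vt m n x y)" for x y
  have pos: "m > 0" "n > 0" using mn by auto
  have D: "distinct [Gf (x+1) y, Gf (x-1) y, Gf x (y+1), Gf x (y-1), Gf x y]" for x y
    unfolding Gf_def Vt_props(1-4)[OF pos] using rainbow(1)[OF mn col Vt_props(5)[OF pos]] .
  have Bd: "Gf x y < 5" for x y
    unfolding Gf_def using rainbow(2)[OF mn col Vt_props(5)[OF pos]] .
  note P = period5[of Gf, OF D Bd]
  have d0: "distinct [Gf (0+1) 0, Gf (0-1) 0, Gf 0 (0+1), Gf 0 (0-1), Gf 0 0]" by (rule D)
  have "5 dvd m"
  proof (rule ccontr)
    assume nd: "\<not> 5 dvd m"
    have per: "Gf (x + int m * t) 0 = Gf x 0" for x t by (simp add: Gf_def Vt_props(6)[OF pos])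
    have p5: "Gf (5 * int k) 0 = Gf 0 0" for k using P by blast
    have "Gf 1 0 = Gf 0 0" using wrap[where G="\<lambda>x. Gf x 0", OF mn(1) per p5 nd] .
    then show False using d0 by simp
  qed
  moreover have "5 dvd n"
  proof (rule ccontr)
    assume nd: "\<not> 5 dvd n"
    have per: "Gf 0 (x + int n * t) = Gf 0 x" for x t by (simp add: Gf_def Vt_props(7)[OF pos])
    have p5: "Gf 0 (5 * int k) = Gf 0 0" for k using P by blast
    have "Gf 0 1 = Gf 0 0" using wrap[where G="\<lambda>x. Gf 0 x", OF mn(2) per p5 nd] .
    then show False using d0 by simp
  qed
  ultimately show ?thesis by simp
qed



definition Fi :: "nat \<times> nat \<Rightarrow> int" where "Fi p = int (fst p) + 2 * int (snd p)"

definition colr :: "(nat \<times> nat) \<times> (nat \<times> nat) set \<Rightarrow> nat" where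
  "colr I = nat (((\<Sum>x\<in>snd I. Fi x) - Fi (fst I)) mod 5)"

lemma colr_eq: "a \<noteq> v \<Longrightarrow> colr (v, {v,a}) = nat (Fi a mod 5)"
  by (simp add: colr_def)

lemma mod5_of_modm: "(5::int) dvd int m \<Longrightarrow> int (k mod m) mod 5 = int k mod 5"
  by (simp add: zmod_int mod_mod_cancel)

context
  fixes m n :: nat
  assumes mn: "m \<ge> 3" "n \<ge> 3" and d: "5 dvd m" "5 dvd n"
begin

lemma modm5: "\<exists>z. int (k mod m) = int k + 5*z"
proof -
  obtain r where r: "m = 5 * r" using d(1) by blast
  have "int (k mod m) = int k - int m * int (k div m)"
    by (metis add_diff_cancel_left' div_mult_mod_eq mult.commute of_nat_add of_nat_mult add.commute)
  then have "int (k mod m) = int k + 5 * (- int r * int (k div m))" using r by simp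
  then show ?thesis by blast
qed

lemma modn5: "\<exists>z. int (k mod n) = int k + 5*z"
proof -
  obtain r where r: "n = 5 * r" using d(2) by blast
  have "int (k mod n) = int k - int n * int (k div n)"
    by (metis add_diff_cancel_left' div_mult_mod_eq mult.commute of_nat_add of_nat_mult add.commute)
  then have "int (k mod n) = int k + 5 * (- int r * int (k div n))" using r by simp
  then show ?thesis by blast
qed

lemma Fnb: "Fi (Rt m p) mod 5 = (Fi p + 1) mod 5" "Fi (Lt m p) mod 5 = (Fi p - 1) mod 5"
  "Fi (Ut n p) mod 5 = (Fi p + 2) mod 5" "Fi (Dt n p) mod 5 = (Fi p - 2) mod 5"
proof -
  obtain i j where p: "p = (i,j)" by (cases p)
  obtain z1 where z1: "int ((i+1) mod m) = int (i+1) + 5*z1" using modm5 by blast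
  obtain z2 where z2: "int ((i+m-1) mod m) = int (i+m-1) + 5*z2" using modm5 by blast
  obtain z3 where z3: "int ((j+1) mod n) = int (j+1) + 5*z3" using modn5 by blast
  obtain z4 where z4: "int ((j+n-1) mod n) = int (j+n-1) + 5*z4" using modn5 by blast
  obtain r where r: "m = 5 * r" using d(1) by blast
  obtain s where s: "n = 5 * s" using d(2) by blast
  have m1: "int (i+m-1) = int i + 5 * int r - 1" using mn r by simp
  have n1: "int (j+n-1) = int j + 5 * int s - 1" using mn s by simp
  have "Fi (Rt m p) = (Fi p + 1) + 5*z1" unfolding p Fi_def Rt_def using z1 by simp
  then show "Fi (Rt m p) mod 5 = (Fi p + 1) mod 5" by (metis mod_mult_self2)
  have "Fi (Lt m p) = (Fi p - 1) + 5*(z2 + int r)" unfolding p Fi_def Lt_def using z2 m1 by (simp add: algebra_simps)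
  then show "Fi (Lt m p) mod 5 = (Fi p - 1) mod 5" by (metis mod_mult_self2)
  have "Fi (Ut n p) = (Fi p + 2) + 5*(2*z3)" unfolding p Fi_def Ut_def using z3 by simp
  then show "Fi (Ut n p) mod 5 = (Fi p + 2) mod 5" by (metis mod_mult_self2)
  have "Fi (Dt n p) = (Fi p - 2) + 5*(2*z4 + 2 * int s)" unfolding p Fi_def Dt_def using z4 n1 by (simp add: algebra_simps)
  then show "Fi (Dt n p) mod 5 = (Fi p - 2) mod 5" by (metis mod_mult_self2)
qed

lemma ar1: "(x::int) mod 5 = (y + k) mod 5 \<Longrightarrow> k mod 5 \<noteq> 0 \<Longrightarrow> x mod 5 \<noteq> y mod 5"
proof
  assume h: "x mod 5 = (y + k) mod 5" "k mod 5 \<noteq> 0" "x mod 5 = y mod 5"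
  have b1: "5 dvd x - (y + k)" using h(1) by (simp only: mod_eq_dvd_iff)
  have b2: "5 dvd x - y" using h(3) by (simp only: mod_eq_dvd_iff)
  note b1 b2
  then have "5 dvd (x - y) - (x - (y + k))" by (rule dvd_diff[rotated])
  then have "5 dvd k" by simp
  then show False using h(2) by simp
qed
lemma ar2: "(x::int) mod 5 = (y + k1) mod 5 \<Longrightarrow> z mod 5 = (y + k2) mod 5 \<Longrightarrow> x mod 5 = z mod 5 \<Longrightarrow> (k1 - k2) mod 5 = 0"
proof -
  assume h: "x mod 5 = (y + k1) mod 5" "z mod 5 = (y + k2) mod 5" "x mod 5 = z mod 5"
  have a1: "5 dvd x - (y + k1)" using h(1) by (simp only: mod_eq_dvd_iff)
  have a2: "5 dvd z - (y + k2)" using h(2) by (simp only: mod_eq_dvd_iff)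
  have a3: "5 dvd x - z" using h(3) by (simp only: mod_eq_dvd_iff)
  note a = a1 a2 a3
  have "k1 - k2 = (x - z) - (x - (y + k1)) + (z - (y + k2))" by simp
  also have "5 dvd \<dots>" by (rule dvd_add[OF dvd_diff[OF a3 a1] a2])
  finally show ?thesis by simp
qed

lemma D12:
  assumes "a \<in> {Rt m p, Lt m p, Ut n p, Dt n p}"
  shows "Fi a mod 5 \<noteq> Fi p mod 5"
    "b \<in> {Rt m p, Lt m p, Ut n p, Dt n p} \<Longrightarrow> Fi a mod 5 = Fi b mod 5 \<Longrightarrow> a = b"
proof -
  define dir where "dir k = (if k = (1::int) then Rt m p else if k = -1 then Lt m p else if k = 2 then Ut n p else Dt n p)" for k
  have r: "\<exists>k\<in>{1,-1,2,-2}. Fi a mod 5 = (Fi p + k) mod 5 \<and> a = dir k"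
    if "a \<in> {Rt m p, Lt m p, Ut n p, Dt n p}" for a
  proof -
    have "a = Rt m p \<or> a = Lt m p \<or> a = Ut n p \<or> a = Dt n p" using that by blast
    then show ?thesis
    proof (elim disjE)
      assume "a = Rt m p" then show ?thesis using Fnb(1)[of p] by (intro bexI[of _ 1]) (auto simp: dir_def)
    next
      assume "a = Lt m p" then show ?thesis using Fnb(2)[of p] by (intro bexI[of _ "-1"]) (auto simp: dir_def)
    next
      assume "a = Ut n p" then show ?thesis using Fnb(3)[of p] by (intro bexI[of _ 2]) (auto simp: dir_def)
    next
      assume "a = Dt n p" then show ?thesis using Fnb(4)[of p] by (intro bexI[of _ "-2"]) (auto simp: dir_def)
    qed
  qed
  obtain k1 where k1: "k1 \<in> {1,-1,2,-2}" "Fi a mod 5 = (Fi p + k1) mod 5" "a = dir k1" using r[OF assms] by blast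
  have "k1 mod 5 \<noteq> 0" using k1(1) by auto
  then show "Fi a mod 5 \<noteq> Fi p mod 5" using ar1[OF k1(2)] by blast
  assume b: "b \<in> {Rt m p, Lt m p, Ut n p, Dt n p}" and eq: "Fi a mod 5 = Fi b mod 5"
  obtain k2 where k2: "k2 \<in> {1,-1,2,-2}" "Fi b mod 5 = (Fi p + k2) mod 5" "b = dir k2" using r[OF b] by blast
  have "(k1 - k2) mod 5 = 0" using ar2[OF k1(2) k2(2) eq] .
  then have "k1 = k2" using k1(1) k2(1) by auto
  then show "a = b" using k1(3) k2(3) by simp
qed

lemma colr_ok: "incidence_colouring (torus_edges m n) 5 colr"
  unfolding incidence_colouring_def
proof (intro conjI ballI impI)
  fix I assume "I \<in> incidences (torus_edges m n)"
  show "colr I < 5" unfolding colr_def by (simp add: nat_less_iff)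
next
  fix I J assume I: "I \<in> incidences (torus_edges m n)" and J: "J \<in> incidences (torus_edges m n)"
    and ne: "I \<noteq> J \<and> inc_adjacent I J"
  obtain v e where Ive: "I = (v,e)" "e \<in> torus_edges m n" "v \<in> e" using I unfolding incidences_def by auto
  obtain w f where Jwf: "J = (w,f)" "f \<in> torus_edges m n" "w \<in> f" using J unfolding incidences_def by auto
  obtain a where a: "v \<in> Vs m n" "a \<in> {Rt m v, Lt m v, Ut n v, Dt n v}" "e = {v,a}" using N4[OF mn Ive(2,3)] by blast
  obtain b where b: "w \<in> Vs m n" "b \<in> {Rt m w, Lt m w, Ut n w, Dt n w}" "f = {w,b}" using N4[OF mn Jwf(2,3)] by blast
  have av: "a \<noteq> v" using a nb_dist[OF mn a(1)] by auto
  have bw: "b \<noteq> w" using b nb_dist[OF mn b(1)] by auto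
  have cI: "colr I = nat (Fi a mod 5)" using Ive a av colr_eq by simp
  have cJ: "colr J = nat (Fi b mod 5)" using Jwf b bw colr_eq by simp
  have "Fi a mod 5 \<noteq> Fi b mod 5"
  proof (cases "v = w")
    case True
    then have "a \<noteq> b" using ne Ive Jwf a b by auto
    then show ?thesis using D12(2)[OF a(2), of b] b True by auto
  next
    case False
    have adj: "e = f \<or> {v,w} = e \<or> {v,w} = f" using ne False Ive Jwf unfolding inc_adjacent_def by auto
    show ?thesis
    proof (cases "e = f")
      case True
      then have "w = a \<and> b = v" using a b False by (auto simp: doubleton_eq_iff)
      then show ?thesis using D12(1)[OF a(2)] by auto
    next
      case ef: False
      show ?thesis
      proof (cases "{v,w} = e")
        case True
        then have "w = a" using a False by (auto simp: doubleton_eq_iff)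
        then show ?thesis using D12(1)[OF b(2)] by auto
      next
        case False
        then have "{v,w} = f" using adj ef by auto
        then have "v = b" using b \<open>v \<noteq> w\<close> by (auto simp: doubleton_eq_iff)
        then show ?thesis using D12(1)[OF a(2)] by auto
      qed
    qed
  qed
  then show "colr I \<noteq> colr J" unfolding cI cJ by (simp add: nat_eq_iff)
qed

end

lemma torus_finite:
  assumes mn: "m \<ge> 3" "n \<ge> 3"
  shows "finite (incidences (torus_edges m n))"
proof -
  have pos: "m > 0" "n > 0" using mn by auto
  have "torus_edges m n \<subseteq> Pow (Vs m n)"
  proof
    fix e assume "e \<in> torus_edges m n"
    then obtain p where "p \<in> Vs m n" "e = {p, Rt m p} \<or> e = {p, Ut n p}" using edges_char[OF pos] by blast
    then show "e \<in> Pow (Vs m n)" using nb_in[OF mn \<open>p \<in> Vs m n\<close>] by blast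
  qed
  moreover have "finite (Vs m n)" by (simp add: Vs_def)
  ultimately have fe: "finite (torus_edges m n)" by (meson finite_Pow_iff finite_subset)
  have "incidences (torus_edges m n) \<subseteq> Vs m n \<times> torus_edges m n"
  proof
    fix I assume "I \<in> incidences (torus_edges m n)"
    then obtain v e where "I = (v,e)" "e \<in> torus_edges m n" "v \<in> e" unfolding incidences_def by auto
    then show "I \<in> Vs m n \<times> torus_edges m n" using N4[OF mn] by blast
  qed
  then show ?thesis using fe \<open>finite (Vs m n)\<close> by (meson finite_SigmaI finite_subset)
qed

lemma some_colouring:
  assumes mn: "m \<ge> 3" "n \<ge> 3"
  shows "\<exists>k c. incidence_colouring (torus_edges m n) k c"
proof -
  obtain f :: "(nat \<times> nat) \<times> (nat \<times> nat) set \<Rightarrow> nat" and k where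
    fk: "f ` incidences (torus_edges m n) = {i. i < k}" "inj_on f (incidences (torus_edges m n))"
    using finite_imp_inj_to_nat_seg[OF torus_finite[OF mn]] by blast
  have "incidence_colouring (torus_edges m n) k f"
    unfolding incidence_colouring_def using fk by (auto simp: inj_on_def)
  then show ?thesis by blast
qed

theorem corollary1:
  fixes m n :: nat
  assumes "m \<ge> 3" and "n \<ge> 3"
  shows "incidence_chromatic_number (torus_edges m n) \<ge> 5 \<and>
         (incidence_chromatic_number (torus_edges m n) = 5 \<longleftrightarrow> 5 dvd m \<and> 5 dvd n)"
proof -
  let ?k = "incidence_chromatic_number (torus_edges m n)"
  have ex: "\<exists>k c. incidence_colouring (torus_edges m n) k c" by (rule some_colouring[OF assms])
  have "\<exists>c. incidence_colouring (torus_edges m n) ?k c"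
    unfolding incidence_chromatic_number_def using ex by (rule LeastI_ex)
  then obtain c where c: "incidence_colouring (torus_edges m n) ?k c" by blast
  have ge: "?k \<ge> 5" by (rule lower[OF assms c])
  have iff: "?k = 5 \<longleftrightarrow> 5 dvd m \<and> 5 dvd n"
  proof
    assume "?k = 5"
    then show "5 dvd m \<and> 5 dvd n" using forward[OF assms] c by simp
  next
    assume d: "5 dvd m \<and> 5 dvd n"
    have "incidence_colouring (torus_edges m n) 5 colr" using colr_ok[OF assms] d by blast
    then have "?k \<le> 5" unfolding incidence_chromatic_number_def by (blast intro: Least_le)
    then show "?k = 5" using ge by simp
  qed
  show ?thesis using ge iff by simp
qed

end
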